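(* For every $\delta>0$ and $p\in(0,1)$ there exists a constant $C=C(\delta,p)<\infty$ such that for all $n\ge1$ and $v\in[0,n]^2\cap\mathbb{Z}^2$, \[ \sum_{i\in\mathbb{N}}I_{v,i}(T_n)^2\le C\,\mathbb{P}(v\in\pi_n)^{2-\delta}. \]
   Context: $\mathbb{N}=\{0,1,2,\dots\}$. Let $(X_{u,j})_{u\in\mathbb{Z}^2,j\in\mathbb{N}}$ be i.i.d. Bernoulli($p$) and $\omega_u=\min\{j\ge0:X_{u,j}=1\}$ (i.i.d. geometric weights). $T_n$ is the maximum of $\sum_{x\in\gamma}\omega_x$ over up-right nearest-neighbour paths $\gamma$ from $(0,0)$ to $(n,n)$, viewed as a function of the bits $(X_{u,j})$; geodesics are maximizing paths and $\pi_n$ is the set of vertices lying on at least one geodesic. The influence of bit $(v,i)$ is $I_{v,i}(T_n)=\mathbb{E}\big[\big|\mathbb{E}[T_n\mid (X_{u,j})_{(u,j)\ne(v,i)}]-T_n\big|\big]$. *)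

theory Defs
  imports "HOL-Probability.Probability"
begin

type_synonym site = "int \<times> int"
type_synonym bits = "site \<times> nat \<Rightarrow> bool"

definition up_right_path :: "nat \<Rightarrow> site list \<Rightarrow> bool" where
  "up_right_path n \<gamma> \<longleftrightarrow>
     length \<gamma> = 2 * n + 1 \<and> hd \<gamma> = (0, 0) \<and> last \<gamma> = (int n, int n) \<and>
     (\<forall>k < 2 * n. \<gamma> ! Suc k = \<gamma> ! k + (1, 0) \<or> \<gamma> ! Suc k = \<gamma> ! k + (0, 1))"

definition weight :: "bits \<Rightarrow> site \<Rightarrow> nat" where
  "weight X u = (LEAST j. X (u, j))"

definition path_weight :: "bits \<Rightarrow> site list \<Rightarrow> real" where
  "path_weight X \<gamma> = (\<Sum>x\<leftarrow>\<gamma>. real (weight X x))"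

definition passage_time :: "nat \<Rightarrow> bits \<Rightarrow> real" where
  "passage_time n X = Max (path_weight X ` {\<gamma>. up_right_path n \<gamma>})"

definition geodesic :: "nat \<Rightarrow> bits \<Rightarrow> site list \<Rightarrow> bool" where
  "geodesic n X \<gamma> \<longleftrightarrow> up_right_path n \<gamma> \<and> path_weight X \<gamma> = passage_time n X"

definition geodesic_vertices :: "nat \<Rightarrow> bits \<Rightarrow> site set" where
  "geodesic_vertices n X = {x. \<exists>\<gamma>. geodesic n X \<gamma> \<and> x \<in> set \<gamma>}"

definition bits_space :: "real \<Rightarrow> bits measure" where
  "bits_space p = PiM UNIV (\<lambda>_. measure_pmf (bernoulli_pmf p))"

definition others_algebra :: "real \<Rightarrow> site \<times> nat \<Rightarrow> bits measure" where
  "others_algebra p k =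
     vimage_algebra (space (bits_space p)) (\<lambda>X. restrict X (UNIV - {k}))
       (PiM (UNIV - {k}) (\<lambda>_. measure_pmf (bernoulli_pmf p)))"

definition influence :: "real \<Rightarrow> nat \<Rightarrow> site \<Rightarrow> nat \<Rightarrow> real" where
  "influence p n v i =
     (\<integral>X. \<bar>real_cond_exp (bits_space p) (others_algebra p (v, i)) (passage_time n) X
            - passage_time n X\<bar> \<partial>bits_space p)"

end

theory Submission
  imports Defs
begin

lemma urp_coords:
  assumes "up_right_path n \<gamma>" "k \<le> 2 * n"
  shows "fst (\<gamma> ! k) + snd (\<gamma> ! k) = int k \<and> fst (\<gamma> ! k) \<ge> 0 \<and> snd (\<gamma> ! k) \<ge> 0"
  using assms(2)
proof (induction k)
  case 0
  have "\<gamma> \<noteq> []" using assms(1) unfolding up_right_path_def by auto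
  then have "\<gamma> ! 0 = (0,0)" using assms(1) unfolding up_right_path_def by (simp add: hd_conv_nth)
  then show ?case by simp
next
  case (Suc k)
  then have "k < 2 * n" by simp
  then have "\<gamma> ! Suc k = \<gamma> ! k + (1, 0) \<or> \<gamma> ! Suc k = \<gamma> ! k + (0, 1)"
    using assms(1) unfolding up_right_path_def by blast
  then show ?case using Suc by auto
qed

lemma urp_distinct:
  assumes "up_right_path n \<gamma>"
  shows "distinct \<gamma>"
proof -
  have len: "length \<gamma> = 2 * n + 1" using assms unfolding up_right_path_def by simp
  show ?thesis
  proof (rule distinct_conv_nth[THEN iffD2], intro allI impI)
    fix i j assume "i < length \<gamma>" "j < length \<gamma>" "i \<noteq> j"
    then have "fst (\<gamma> ! i) + snd (\<gamma> ! i) \<noteq> fst (\<gamma> ! j) + snd (\<gamma> ! j)"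
      using urp_coords[OF assms, of i] urp_coords[OF assms, of j] len by auto
    then show "\<gamma> ! i \<noteq> \<gamma> ! j" by metis
  qed
qed

lemma urp_finite: "finite {\<gamma>. up_right_path n \<gamma>}"
proof -
  let ?B = "{0..int (2*n)} \<times> {0..int (2*n)}"
  have sub: "set \<gamma> \<subseteq> ?B \<and> length \<gamma> = 2 * n + 1" if u: "up_right_path n \<gamma>" for \<gamma>
  proof
    have len: "length \<gamma> = 2 * n + 1" using u unfolding up_right_path_def by simp
    show "length \<gamma> = 2 * n + 1" by (fact len)
    show "set \<gamma> \<subseteq> ?B"
    proof
      fix x assume "x \<in> set \<gamma>"
      then obtain k where k: "k < length \<gamma>" "\<gamma> ! k = x" by (auto simp: in_set_conv_nth)
      then show "x \<in> ?B" using urp_coords[OF u, of k] len by (cases x) auto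
    qed
  qed
  have "{\<gamma>. up_right_path n \<gamma>} \<subseteq> {xs. set xs \<subseteq> ?B \<and> length xs = 2 * n + 1}"
    using sub by blast
  moreover have "finite {xs. set xs \<subseteq> ?B \<and> length xs = 2 * n + 1}"
    by (rule finite_lists_length_eq) simp
  ultimately show ?thesis by (rule finite_subset)
qed

definition std_path :: "nat \<Rightarrow> site list" where
  "std_path n = map (\<lambda>k. (int (min k n), int (k - n))) [0..<2*n+1]"

lemma std_path_nth: "j < 2*n+1 \<Longrightarrow> std_path n ! j = (int (min j n), int (j - n))"
  unfolding std_path_def by (simp del: upt_Suc)

lemma std_path_urp: "up_right_path n (std_path n)"
  unfolding up_right_path_def
proof (intro conjI allI impI)
  show "length (std_path n) = 2 * n + 1" unfolding std_path_def by simp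
  have ne: "std_path n \<noteq> []" unfolding std_path_def by simp
  show "hd (std_path n) = (0, 0)" using std_path_nth[of 0 n] ne by (simp add: hd_conv_nth)
  show "last (std_path n) = (int n, int n)" using std_path_nth[of "2*n" n] ne
    by (simp add: last_conv_nth std_path_def del: upt_Suc)
  fix k assume k: "k < 2 * n"
  show "std_path n ! Suc k = std_path n ! k + (1, 0) \<or> std_path n ! Suc k = std_path n ! k + (0, 1)"
    using k std_path_nth[of k n] std_path_nth[of "Suc k" n] by (cases "k < n") auto
qed

lemma urp_nonempty: "{\<gamma>. up_right_path n \<gamma>} \<noteq> {}"
  using std_path_urp by blast

lemma path_weight_nonneg: "path_weight X \<gamma> \<ge> 0"
  unfolding path_weight_def by (induction \<gamma>) auto

lemma path_weight_le_T: "up_right_path n \<gamma> \<Longrightarrow> path_weight X \<gamma> \<le> passage_time n X"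
  unfolding passage_time_def by (rule Max_ge) (use urp_finite in auto)

lemma geodesic_exists: "\<exists>\<gamma>. geodesic n X \<gamma>"
proof -
  have "passage_time n X \<in> path_weight X ` {\<gamma>. up_right_path n \<gamma>}"
    unfolding passage_time_def by (rule Max_in) (use urp_finite urp_nonempty in auto)
  then show ?thesis unfolding geodesic_def by auto
qed

lemma T_nonneg: "passage_time n X \<ge> 0"
  using path_weight_le_T[OF std_path_urp, where X=X and n=n] path_weight_nonneg[of X "std_path n"] by linarith

lemma T_le_sum: "passage_time n X \<le> (\<Sum>\<gamma>\<in>{\<gamma>. up_right_path n \<gamma>}. path_weight X \<gamma>)"
proof -
  obtain \<gamma> where g: "geodesic n X \<gamma>" using geodesic_exists by blast
  then have "passage_time n X = path_weight X \<gamma>" "\<gamma> \<in> {\<gamma>. up_right_path n \<gamma>}"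
    unfolding geodesic_def by auto
  then show ?thesis
    using member_le_sum[of \<gamma> "{\<gamma>. up_right_path n \<gamma>}" "path_weight X"] urp_finite path_weight_nonneg
    by auto
qed

lemma path_weight_distinct: "distinct \<gamma> \<Longrightarrow> path_weight X \<gamma> = (\<Sum>x\<in>set \<gamma>. real (weight X x))"
  unfolding path_weight_def by (simp add: sum_list_distinct_conv_sum_set)

lemma compare_T:
  assumes le: "\<And>x. weight Y x \<le> weight X x" and eq: "\<And>x. x \<noteq> v \<Longrightarrow> weight Y x = weight X x"
  shows "passage_time n Y \<le> passage_time n X"
    "passage_time n X - passage_time n Y \<le> real (weight X v - weight Y v) * indicator {X. v \<in> geodesic_vertices n X} X"
proof -
  have pw_le: "path_weight Y \<gamma> \<le> path_weight X \<gamma>" for \<gamma>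
    unfolding path_weight_def by (induction \<gamma>) (auto simp: le add_mono)
  have pw_diff: "path_weight X \<gamma> - path_weight Y \<gamma> = (if v \<in> set \<gamma> then real (weight X v - weight Y v) else 0)"
    if u: "up_right_path n \<gamma>" for \<gamma>
  proof -
    have d: "distinct \<gamma>" by (rule urp_distinct[OF u])
    have "path_weight X \<gamma> - path_weight Y \<gamma> = (\<Sum>x\<in>set \<gamma>. real (weight X x) - real (weight Y x))"
      using d by (simp add: path_weight_distinct sum_subtractf)
    also have "\<dots> = (\<Sum>x\<in>set \<gamma>. if x = v then real (weight X v - weight Y v) else 0)"
      by (rule sum.cong) (auto simp: eq le of_nat_diff)
    also have "\<dots> = (if v \<in> set \<gamma> then real (weight X v - weight Y v) else 0)"
      by (simp add: sum.delta)
    finally show ?thesis .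
  qed
  obtain \<gamma>Y where gY: "geodesic n Y \<gamma>Y" using geodesic_exists by blast
  show "passage_time n Y \<le> passage_time n X"
    using gY pw_le[of \<gamma>Y] path_weight_le_T[of n \<gamma>Y X] unfolding geodesic_def by auto
  obtain \<gamma> where g: "geodesic n X \<gamma>" using geodesic_exists by blast
  have u: "up_right_path n \<gamma>" and TX: "passage_time n X = path_weight X \<gamma>"
    using g unfolding geodesic_def by auto
  have "passage_time n X - passage_time n Y \<le> path_weight X \<gamma> - path_weight Y \<gamma>"
    using TX path_weight_le_T[OF u, of Y] by linarith
  also have "\<dots> \<le> real (weight X v - weight Y v) * indicator {X. v \<in> geodesic_vertices n X} X"
  proof (cases "v \<in> set \<gamma>")
    case True
    then have "X \<in> {X. v \<in> geodesic_vertices n X}" using g unfolding geodesic_vertices_def by auto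
    then show ?thesis using pw_diff[OF u] True by simp
  next
    case False
    then show ?thesis using pw_diff[OF u] by simp
  qed
  finally show "passage_time n X - passage_time n Y \<le> real (weight X v - weight Y v) * indicator {X. v \<in> geodesic_vertices n X} X" .
qed

lemma weight_upd_other: "u \<noteq> v \<Longrightarrow> weight (X((v, i) := b)) u = weight X u"
  unfolding weight_def by simp

lemma weight_upd_True:
  assumes "\<exists>l. X (v, l)"
  shows "weight (X((v, i) := True)) v = min (weight X v) i"
proof -
  let ?w = "weight X v"
  have w: "X (v, ?w)" unfolding weight_def using assms by (rule LeastI_ex)
  have lw: "\<And>j. j < ?w \<Longrightarrow> \<not> X (v, j)" unfolding weight_def using not_less_Least by blast
  show ?thesis
  proof (cases "?w \<le> i")
    case True
    then show ?thesis unfolding weight_def[of "X(_ := _)"]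
      using w lw by (intro Least_equality) (auto simp: min_def weight_def[symmetric] intro: leI)
  next
    case False
    then show ?thesis unfolding weight_def[of "X(_ := _)"]
      using lw by (intro Least_equality) (auto simp: min_def weight_def[symmetric] intro: leI)
  qed
qed

lemma pointwise_bound:
  assumes "\<exists>l. X (v, l)"
  shows "\<bar>passage_time n X - passage_time n (X((v, i) := True))\<bar>
          \<le> real (weight X v - i) * indicator {X. v \<in> geodesic_vertices n X} X"
proof -
  let ?Y = "X((v, i) := True)"
  have le: "weight ?Y x \<le> weight X x" for x
    by (cases "x = v") (auto simp: weight_upd_True[OF assms] weight_upd_other)
  have eq: "x \<noteq> v \<Longrightarrow> weight ?Y x = weight X x" for x by (simp add: weight_upd_other)
  have d: "weight X v - weight ?Y v = weight X v - i"
    by (simp add: weight_upd_True[OF assms] min_def)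
  show ?thesis using compare_T[where v=v and n=n, OF le eq] d by simp
qed

lemma space_bits[simp]: "space (bits_space p) = UNIV"
  by (auto simp: bits_space_def space_PiM PiE_def extensional_def)

lemma comp_meas_bits[measurable]: "(\<lambda>X. X k) \<in> bits_space p \<rightarrow>\<^sub>M count_space UNIV"
  unfolding bits_space_def by measurable

lemma meas_weight:
  assumes [measurable]: "\<And>k. (\<lambda>x. F x k) \<in> N \<rightarrow>\<^sub>M count_space UNIV"
  shows "(\<lambda>x. real (weight (F x) u)) \<in> borel_measurable N"
proof -
  have [measurable]: "(\<lambda>x. weight (F x) u) \<in> N \<rightarrow>\<^sub>M count_space UNIV"
    unfolding weight_def by measurable
  show ?thesis by measurable
qed

lemma meas_pw:
  assumes "\<And>k. (\<lambda>x. F x k) \<in> N \<rightarrow>\<^sub>M count_space UNIV"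
  shows "(\<lambda>x. path_weight (F x) \<gamma>) \<in> borel_measurable N"
proof (induction \<gamma>)
  case Nil then show ?case by (simp add: path_weight_def)
next
  case (Cons a \<gamma>)
  have "(\<lambda>x. path_weight (F x) (a # \<gamma>)) = (\<lambda>x. real (weight (F x) a) + path_weight (F x) \<gamma>)"
    by (simp add: path_weight_def)
  then show ?case using Cons meas_weight[OF assms] by simp
qed

lemma meas_T:
  assumes "\<And>k. (\<lambda>x. F x k) \<in> N \<rightarrow>\<^sub>M count_space UNIV"
  shows "(\<lambda>x. passage_time n (F x)) \<in> borel_measurable N"
  unfolding passage_time_def
  by (rule borel_measurable_Max[OF urp_finite]) (rule meas_pw[OF assms])

lemma meas_T_bits[measurable]: "passage_time n \<in> borel_measurable (bits_space p)"
  using meas_T[of "\<lambda>X. X" "bits_space p" n] by simp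

lemma meas_pw_bits[measurable]: "(\<lambda>X. path_weight X \<gamma>) \<in> borel_measurable (bits_space p)"
  using meas_pw[of "\<lambda>X. X" "bits_space p" \<gamma>] by simp

lemma meas_weight_bits[measurable]: "(\<lambda>X. real (weight X u)) \<in> borel_measurable (bits_space p)"
  using meas_weight[of "\<lambda>X. X" "bits_space p" u] by simp

lemma geo_set_eq: "{X. v \<in> geodesic_vertices n X} =
   (\<Union>\<gamma>\<in>{\<gamma>. up_right_path n \<gamma> \<and> v \<in> set \<gamma>}. {X. path_weight X \<gamma> = passage_time n X})"
  unfolding geodesic_vertices_def geodesic_def by auto

lemma pw_eq_meas: "{X. path_weight X \<gamma> = passage_time n X} \<in> sets (bits_space p)"
proof -
  have "{X \<in> space (bits_space p). path_weight X \<gamma> = passage_time n X} \<in> sets (bits_space p)"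
    by measurable
  then show ?thesis by simp
qed

lemma geo_set_meas: "{X \<in> space (bits_space p). v \<in> geodesic_vertices n X} \<in> sets (bits_space p)"
proof -
  have "{X \<in> space (bits_space p). v \<in> geodesic_vertices n X} =
     (\<Union>\<gamma>\<in>{\<gamma>. up_right_path n \<gamma> \<and> v \<in> set \<gamma>}. {X \<in> space (bits_space p). path_weight X \<gamma> = passage_time n X})"
    using geo_set_eq[of v n] by auto
  also have "\<dots> \<in> sets (bits_space p)"
    by (rule sets.finite_UN) (auto intro: finite_subset[OF _ urp_finite] pw_eq_meas)
  finally show ?thesis .
qed

context fixes p :: real assumes p: "0 < p" "p < 1"
begin

interpretation P: product_prob_space "\<lambda>_::site \<times> nat. measure_pmf (bernoulli_pmf p)" UNIV
  by unfold_locales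

lemma prob_bits: "prob_space (bits_space p)"
  unfolding bits_space_def by (rule P.prob_space_axioms)

lemma cyl_emeasure:
  "emeasure (bits_space p) {X. \<forall>l\<le>t. \<not> X (u, l)} = ennreal ((1 - p) ^ (t + 1))"
proof -
  let ?J = "(\<lambda>l. (u, l)) ` {..t}"
  have "emeasure (bits_space p) {X \<in> space (bits_space p). \<forall>k\<in>?J. X k \<in> {False}} =
        (\<Prod>k\<in>?J. emeasure (measure_pmf (bernoulli_pmf p)) {False})"
    unfolding bits_space_def by (rule P.emeasure_PiM_Collect) auto
  also have "\<dots> = (\<Prod>k\<in>?J. ennreal (1 - p))"
    using p by (simp add: emeasure_pmf_single)
  also have "\<dots> = ennreal ((1 - p) ^ (t + 1))"
    using p by (simp add: card_image inj_on_def ennreal_power[symmetric] ennreal_mult[symmetric] del: power_Suc)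
  also have "{X \<in> space (bits_space p). \<forall>k\<in>?J. X k \<in> {False}} = {X. \<forall>l\<le>t. \<not> X (u, l)}"
    by auto
  finally show ?thesis .
qed

lemma cyl_meas: "{X. \<forall>l\<le>t. \<not> X (u, l)} \<in> sets (bits_space p)"
proof -
  have "{X \<in> space (bits_space p). \<forall>l\<in>{..t}. \<not> X (u, l)} \<in> sets (bits_space p)" by measurable
  moreover have "{X \<in> space (bits_space p). \<forall>l\<in>{..t}. \<not> X (u, l)} = {X. \<forall>l\<le>t. \<not> X (u, l)}" by auto
  ultimately show ?thesis by simp
qed

lemma AE_success: "AE X in bits_space p. \<exists>l. X (v, l)"
proof -
  interpret prob_space "bits_space p" by (rule prob_bits)
  let ?N = "{X. \<forall>l. \<not> X (v, l)}"
  have Nm: "?N \<in> sets (bits_space p)"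
  proof -
    have "{X \<in> space (bits_space p). \<forall>l. \<not> X (v, l)} \<in> sets (bits_space p)" by measurable
    then show ?thesis by simp
  qed
  have le: "measure (bits_space p) ?N \<le> (1 - p) ^ (t + 1)" for t
  proof -
    have "measure (bits_space p) ?N \<le> measure (bits_space p) {X. \<forall>l\<le>t. \<not> X (v, l)}"
      by (rule finite_measure_mono) (auto simp: cyl_meas)
    also have "\<dots> = (1 - p) ^ (t + 1)"
      using cyl_emeasure[of t v] p by (simp add: emeasure_eq_measure)
    finally show ?thesis .
  qed
  have "measure (bits_space p) ?N = 0"
  proof (rule ccontr)
    assume "measure (bits_space p) ?N \<noteq> 0"
    then have pos: "measure (bits_space p) ?N > 0" by (simp add: zero_less_measure_iff)
    obtain t where "(1 - p) ^ t < measure (bits_space p) ?N"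
      using real_arch_pow_inv[OF pos, of "1 - p"] p by auto
    moreover have "(1 - p) ^ (t + 1) \<le> (1 - p) ^ t"
      using p by (intro power_decreasing) auto
    ultimately show False using le[of t] by linarith
  qed
  then have "?N \<in> null_sets (bits_space p)"
    using Nm by (simp add: emeasure_eq_measure null_sets_def)
  then show ?thesis by (rule AE_I') auto
qed

end

lemma min_powr:
  fixes x y \<theta> :: real
  assumes "0 \<le> x" "0 \<le> y" "0 < \<theta>" "\<theta> < 1"
  shows "min x y \<le> x powr \<theta> * y powr (1 - \<theta>)"
proof (cases "x = 0 \<or> y = 0")
  case True then show ?thesis using assms by auto
next
  case False
  then have xp: "x > 0" and yp: "y > 0" using assms by auto
  show ?thesis
  proof (cases "x \<le> y")
    case True
    have "min x y = x powr \<theta> * x powr (1 - \<theta>)" using xp True by (simp add: powr_add[symmetric])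
    also have "\<dots> \<le> x powr \<theta> * y powr (1 - \<theta>)"
      using True xp assms by (intro mult_left_mono powr_mono2) auto
    finally show ?thesis .
  next
    case False
    have "min x y = y powr \<theta> * y powr (1 - \<theta>)" using yp False by (simp add: powr_add[symmetric])
    also have "\<dots> \<le> x powr \<theta> * y powr (1 - \<theta>)"
      using False yp assms by (intro mult_right_mono powr_mono2) auto
    finally show ?thesis .
  qed
qed

lemma pow_powr:
  assumes q: "0 < (q::real)" shows "(q ^ t) powr \<theta> = (q powr \<theta>) ^ t"
proof -
  have "(q ^ t) powr \<theta> = (q powr real t) powr \<theta>" using q by (simp add: powr_realpow)
  also have "\<dots> = (q powr \<theta>) powr real t" by (simp add: powr_powr mult.commute)
  also have "\<dots> = (q powr \<theta>) ^ t" using q by (simp add: powr_realpow)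
  finally show ?thesis .
qed

context fixes p :: real assumes p: "0 < p" "p < 1"
begin

lemma tail_nn:
  assumes A: "A \<in> sets (bits_space p)" and th: "0 < \<theta>" "\<theta> < 1"
  shows "(\<integral>\<^sup>+X. ennreal (real (weight X u - m) * indicator A X) \<partial>bits_space p)
     \<le> ennreal (measure (bits_space p) A powr (1 - \<theta>) * ((1 - p) powr \<theta>) ^ (m + 1) / (1 - (1 - p) powr \<theta>))"
proof -
  interpret prob_space "bits_space p" by (rule prob_bits[OF p])
  let ?M = "bits_space p"
  define r where "r = (1 - p) powr \<theta>"
  define P where "P = measure ?M A"
  have r0: "0 < r" and r1: "r < 1" unfolding r_def using p th powr_less_mono2[of \<theta> "1 - p" 1] by auto
  define Z where "Z j = {X. \<forall>l\<le>m+j. \<not> X (u, l)} \<inter> A" for j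
  have Zm: "Z j \<in> sets ?M" for j unfolding Z_def using cyl_meas[OF p] A by auto
  have pt: "ennreal (real (weight X u - m) * indicator A X) \<le> (\<Sum>j. indicator (Z j) X)" for X
  proof (cases "X \<in> A")
    case True
    let ?N = "weight X u - m"
    have "ennreal (real (weight X u - m) * indicator A X) = (\<Sum>j<?N. (1::ennreal))"
      using True by (simp add: ennreal_of_nat_eq_real_of_nat)
    also have "\<dots> = (\<Sum>j<?N. indicator (Z j) X)"
    proof (rule sum.cong)
      fix j assume "j \<in> {..<?N}"
      then have "m + j < weight X u" by simp
      then have "\<forall>l\<le>m+j. \<not> X (u, l)" unfolding weight_def
        using not_less_Least[where P="\<lambda>l. X (u, l)"] by (meson le_less_trans)
      then show "(1::ennreal) = indicator (Z j) X" using True unfolding Z_def by simp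
    qed simp
    also have "\<dots> \<le> (\<Sum>j. indicator (Z j) X)"
      by (rule sum_le_suminf) auto
    finally show ?thesis .
  next
    case False then show ?thesis by simp
  qed
  have "(\<integral>\<^sup>+X. ennreal (real (weight X u - m) * indicator A X) \<partial>?M) \<le> (\<integral>\<^sup>+X. (\<Sum>j. indicator (Z j) X) \<partial>?M)"
    by (rule nn_integral_mono) (rule pt)
  also have "\<dots> = (\<Sum>j. \<integral>\<^sup>+X. indicator (Z j) X \<partial>?M)"
    by (rule nn_integral_suminf) (use Zm in auto)
  also have "\<dots> = (\<Sum>j. emeasure ?M (Z j))"
    using Zm by simp
  also have "\<dots> \<le> (\<Sum>j. ennreal (P powr (1 - \<theta>) * r ^ (m + 1) * r ^ j))"
  proof (rule suminf_le)
    fix j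
    have "emeasure ?M (Z j) = ennreal (measure ?M (Z j))" by (simp add: emeasure_eq_measure)
    also have "measure ?M (Z j) \<le> min ((1 - p) ^ (m + j + 1)) P"
    proof -
      have "measure ?M (Z j) \<le> measure ?M {X. \<forall>l\<le>m+j. \<not> X (u, l)}"
        unfolding Z_def by (rule finite_measure_mono) (auto simp: cyl_meas[OF p])
      also have "\<dots> = (1 - p) ^ (m + j + 1)"
        using cyl_emeasure[OF p, of "m+j" u] p by (simp add: emeasure_eq_measure)
      finally have 1: "measure ?M (Z j) \<le> (1 - p) ^ (m + j + 1)" .
      have "measure ?M (Z j) \<le> P" unfolding Z_def P_def by (rule finite_measure_mono) (auto simp: A)
      with 1 show ?thesis by simp
    qed
    also have "\<dots> \<le> ((1 - p) ^ (m + j + 1)) powr \<theta> * P powr (1 - \<theta>)"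
      using p th by (intro min_powr) (auto simp: P_def)
    also have "\<dots> = P powr (1 - \<theta>) * r ^ (m + 1) * r ^ j"
    proof -
      have "((1 - p) ^ (m + j + 1)) powr \<theta> = r ^ (m + j + 1)"
        using p unfolding r_def by (intro pow_powr) simp
      then show ?thesis by (simp add: power_add mult_ac)
    qed
    finally show "emeasure ?M (Z j) \<le> ennreal (P powr (1 - \<theta>) * r ^ (m + 1) * r ^ j)"
      by (simp add: ennreal_leI)
  qed auto
  also have "\<dots> = ennreal (\<Sum>j. P powr (1 - \<theta>) * r ^ (m + 1) * r ^ j)"
    using r0 r1 by (intro suminf_ennreal2) (auto intro: summable_mult summable_geometric)
  also have "(\<Sum>j. P powr (1 - \<theta>) * r ^ (m + 1) * r ^ j) = P powr (1 - \<theta>) * r ^ (m + 1) / (1 - r)"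
    using r0 r1 by (simp add: suminf_mult suminf_geometric summable_geometric divide_simps)
  finally show ?thesis unfolding r_def P_def .
qed

lemma weight_integrable: "integrable (bits_space p) (\<lambda>X. real (weight X u))"
proof (rule integrableI_nonneg)
  interpret prob_space "bits_space p" by (rule prob_bits[OF p])
  show "(\<lambda>X. real (weight X u)) \<in> borel_measurable (bits_space p)" by measurable
  show "AE X in bits_space p. 0 \<le> real (weight X u)" by simp
  have "(\<integral>\<^sup>+X. ennreal (real (weight X u)) \<partial>bits_space p)
     = (\<integral>\<^sup>+X. ennreal (real (weight X u - 0) * indicator (space (bits_space p)) X) \<partial>bits_space p)"
    by simp
  also have "\<dots> \<le> ennreal (measure (bits_space p) (space (bits_space p)) powr (1 - 1/2) * ((1 - p) powr (1/2)) ^ (0 + 1) / (1 - (1 - p) powr (1/2)))"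
    by (rule tail_nn) (use sets.top[of "bits_space p"] in auto)
  also have "\<dots> < \<infinity>" by simp
  finally show "(\<integral>\<^sup>+X. ennreal (real (weight X u)) \<partial>bits_space p) < \<infinity>" .
qed

end

lemma cond_exp_dev:
  fixes f h :: "'a \<Rightarrow> real"
  assumes sf: "sigma_finite_subalgebra M F" and fi: "integrable M f" and hi: "integrable M h"
    and hF: "h \<in> borel_measurable F"
  shows "(\<integral>x. \<bar>real_cond_exp M F f x - f x\<bar> \<partial>M) \<le> 2 * (\<integral>x. \<bar>f x - h x\<bar> \<partial>M)"
proof -
  interpret sigma_finite_subalgebra M F by (rule sf)
  define g where "g x = f x - h x" for x
  have gi: "integrable M g" unfolding g_def using fi hi by auto
  have [measurable]: "g \<in> borel_measurable M" using gi by auto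
  have cgi: "integrable M (real_cond_exp M F g)" using gi by (rule real_cond_exp_int(1))
  have cfi: "integrable M (real_cond_exp M F f)" using fi by (rule real_cond_exp_int(1))
  have ae1: "AE x in M. real_cond_exp M F g x = real_cond_exp M F f x - real_cond_exp M F h x"
    unfolding g_def using fi hi by (rule real_cond_exp_diff)
  have ae2: "AE x in M. real_cond_exp M F h x = h x" using hi hF by (rule real_cond_exp_F_meas)
  have ae: "AE x in M. \<bar>real_cond_exp M F f x - f x\<bar> \<le> \<bar>real_cond_exp M F g x\<bar> + \<bar>g x\<bar>"
    using ae1 ae2 by eventually_elim (auto simp: g_def)
  have 1: "(\<integral>x. \<bar>real_cond_exp M F f x - f x\<bar> \<partial>M) \<le> (\<integral>x. \<bar>real_cond_exp M F g x\<bar> + \<bar>g x\<bar> \<partial>M)"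
    by (rule integral_mono_AE) (use ae cfi fi cgi gi in auto)
  define s where "s x = sgn (real_cond_exp M F g x)" for x
  have sF [measurable]: "s \<in> borel_measurable F" unfolding s_def by measurable
  have sM [measurable]: "s \<in> borel_measurable M" using sF by (rule measurable_from_subalg[OF subalg])
  have sgi: "integrable M (\<lambda>x. s x * g x)"
    by (rule Bochner_Integration.integrable_bound[OF gi]) (auto simp: s_def abs_mult sgn_real_def)
  have "(\<integral>x. \<bar>real_cond_exp M F g x\<bar> \<partial>M) = (\<integral>x. s x * real_cond_exp M F g x \<partial>M)"
    by (rule Bochner_Integration.integral_cong[OF refl]) (auto simp: s_def sgn_real_def)
  also have "\<dots> = (\<integral>x. s x * g x \<partial>M)"
    by (rule real_cond_exp_intg(2)) (use sgi in auto)
  also have "\<dots> \<le> (\<integral>x. \<bar>g x\<bar> \<partial>M)"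
    by (rule Bochner_Integration.integral_mono) (use sgi gi in \<open>auto simp: s_def sgn_real_def\<close>)
  finally have 2: "(\<integral>x. \<bar>real_cond_exp M F g x\<bar> \<partial>M) \<le> (\<integral>x. \<bar>g x\<bar> \<partial>M)" .
  have "(\<integral>x. \<bar>real_cond_exp M F g x\<bar> + \<bar>g x\<bar> \<partial>M) = (\<integral>x. \<bar>real_cond_exp M F g x\<bar> \<partial>M) + (\<integral>x. \<bar>g x\<bar> \<partial>M)"
    using cgi gi by (intro Bochner_Integration.integral_add) auto
  with 1 2 show ?thesis unfolding g_def by linarith
qed

lemma meas_weight_nat[measurable]: "(\<lambda>X. weight X u) \<in> bits_space p \<rightarrow>\<^sub>M count_space UNIV"
  unfolding weight_def by measurable

lemma pw_integrable:
  assumes p: "0 < p" "p < 1"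
  shows "integrable (bits_space p) (\<lambda>X. path_weight X \<gamma>)"
proof (induction \<gamma>)
  case Nil then show ?case by (simp add: path_weight_def)
next
  case (Cons a \<gamma>)
  have "(\<lambda>X. path_weight X (a # \<gamma>)) = (\<lambda>X. real (weight X a) + path_weight X \<gamma>)"
    by (simp add: path_weight_def)
  then show ?case using Cons weight_integrable[OF p, of a] by simp
qed

lemma T_integrable:
  assumes p: "0 < p" "p < 1"
  shows "integrable (bits_space p) (passage_time n)"
proof (rule Bochner_Integration.integrable_bound)
  show "integrable (bits_space p) (\<lambda>X. \<Sum>\<gamma>\<in>{\<gamma>. up_right_path n \<gamma>}. path_weight X \<gamma>)"
    using pw_integrable[OF p] by auto
  show "passage_time n \<in> borel_measurable (bits_space p)" by measurable
  show "AE X in bits_space p. norm (passage_time n X) \<le> norm (\<Sum>\<gamma>\<in>{\<gamma>. up_right_path n \<gamma>}. path_weight X \<gamma>)"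
  proof (intro AE_I2)
    fix X
    have "passage_time n X \<le> \<bar>\<Sum>\<gamma>\<in>{\<gamma>. up_right_path n \<gamma>}. path_weight X \<gamma>\<bar>"
      using T_le_sum[of n X] by linarith
    then show "norm (passage_time n X) \<le> norm (\<Sum>\<gamma>\<in>{\<gamma>. up_right_path n \<gamma>}. path_weight X \<gamma>)"
      using T_nonneg[of n X] by simp
  qed
qed

lemma others_subalg: "subalgebra (bits_space p) (others_algebra p k)"
  unfolding subalgebra_def others_algebra_def
proof
  show "sets (vimage_algebra (space (bits_space p)) (\<lambda>X. restrict X (UNIV - {k}))
          (Pi\<^sub>M (UNIV - {k}) (\<lambda>_. measure_pmf (bernoulli_pmf p)))) \<subseteq> sets (bits_space p)"
    by (rule sets_image_in_sets[OF refl]) (unfold bits_space_def, rule measurable_restrict_subset, simp)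
qed simp

lemma h_meas:
  "(\<lambda>X. passage_time n (X(k := True))) \<in> borel_measurable (others_algebra p k)"
proof -
  let ?N = "Pi\<^sub>M (UNIV - {k}) (\<lambda>_. measure_pmf (bernoulli_pmf p))"
  have g: "(\<lambda>Y. passage_time n (\<lambda>j. if j = k then True else Y j)) \<in> borel_measurable ?N"
  proof (rule meas_T)
    fix j
    show "(\<lambda>Y. if j = k then True else Y j) \<in> ?N \<rightarrow>\<^sub>M count_space UNIV"
    proof (cases "j = k")
      case True then show ?thesis by simp
    next
      case False
      then have e: "(\<lambda>Y. if j = k then True else Y j) = (\<lambda>Y. Y j)" by simp
      have "(\<lambda>Y. Y j) \<in> ?N \<rightarrow>\<^sub>M count_space UNIV"
        using measurable_component_singleton[of j "UNIV - {k}" "\<lambda>_. measure_pmf (bernoulli_pmf p)"] False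
        by (simp add: measurable_cong_sets[OF refl sets_measure_pmf_count_space])
      then show ?thesis by (simp only: e)
    qed
  qed
  have r: "(\<lambda>X. restrict X (UNIV - {k})) \<in> others_algebra p k \<rightarrow>\<^sub>M ?N"
    unfolding others_algebra_def by (rule measurable_vimage_algebra1) (auto simp: space_PiM)
  have "(\<lambda>X. passage_time n (\<lambda>j. if j = k then True else restrict X (UNIV - {k}) j)) \<in> borel_measurable (others_algebra p k)"
    using measurable_compose[OF r g] by simp
  moreover have "(\<lambda>j. if j = k then True else restrict X (UNIV - {k}) j) = X(k := True)" for X :: bits
    by (auto simp: restrict_def)
  ultimately show ?thesis by simp
qed

context fixes p :: real assumes p: "0 < p" "p < 1"
begin

lemma influence_bound:
  assumes th: "0 < \<theta>" "\<theta> < 1"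
  shows "influence p n v i \<le> 2 * (measure (bits_space p) {X \<in> space (bits_space p). v \<in> geodesic_vertices n X} powr (1 - \<theta>)
             * ((1 - p) powr \<theta>) ^ (i + 1) / (1 - (1 - p) powr \<theta>))"
proof -
  interpret prob_space "bits_space p" by (rule prob_bits[OF p])
  let ?M = "bits_space p"
  let ?F = "others_algebra p (v, i)"
  let ?A = "{X \<in> space (bits_space p). v \<in> geodesic_vertices n X}"
  let ?B = "measure ?M ?A powr (1 - \<theta>) * ((1 - p) powr \<theta>) ^ (i + 1) / (1 - (1 - p) powr \<theta>)"
  define T where "T = passage_time n"
  define h where "h X = T (X((v, i) := True))" for X
  define D where "D X = real (weight X v - i) * indicator ?A X" for X
  have Am[measurable]: "?A \<in> sets ?M" by (rule geo_set_meas)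
  have r1: "(1 - p) powr \<theta> < 1" using p th powr_less_mono2[of \<theta> "1 - p" 1] by auto
  have Bnn: "0 \<le> ?B" using r1 by auto
  have sf: "sigma_finite_subalgebra ?M ?F"
    by (rule finite_measure_subalgebra_is_sigma_finite)
       (unfold_locales, rule others_subalg)
  have Ti: "integrable ?M T" unfolding T_def by (rule T_integrable[OF p])
  have Tm: "T \<in> borel_measurable ?M" unfolding T_def by measurable
  have Dm[measurable]: "D \<in> borel_measurable ?M" unfolding D_def by measurable
  have Dnn: "\<And>X. 0 \<le> D X" unfolding D_def by simp
  have Dnn_int: "(\<integral>\<^sup>+X. ennreal (D X) \<partial>?M) \<le> ennreal ?B"
    unfolding D_def by (rule tail_nn[OF p Am th])
  have Di: "integrable ?M D"
  proof (rule integrableI_nonneg)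
    show "(\<integral>\<^sup>+X. ennreal (D X) \<partial>?M) < \<infinity>"
      using le_less_trans[OF Dnn_int ennreal_less_top] by simp
  qed (use Dnn in auto)
  have hM[measurable]: "h \<in> borel_measurable ?M"
    unfolding h_def T_def by (rule measurable_from_subalg[OF others_subalg h_meas])
  have hF: "h \<in> borel_measurable ?F" unfolding h_def T_def by (rule h_meas)
  have ae: "AE X in ?M. \<bar>T X - h X\<bar> \<le> D X"
    using AE_success[OF p, of v]
  proof eventually_elim
    case (elim X)
    show ?case using pointwise_bound[OF elim, of n i] unfolding T_def h_def D_def by simp
  qed
  have dTi: "integrable ?M (\<lambda>X. T X - h X)"
    by (rule Bochner_Integration.integrable_bound[OF Di]) (use ae Dnn borel_measurable_diff[OF Tm hM] in auto)
  have hi: "integrable ?M h"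
  proof -
    have "integrable ?M (\<lambda>X. T X - (T X - h X))"
      using Ti dTi by (rule Bochner_Integration.integrable_diff)
    then show ?thesis by simp
  qed
  have "influence p n v i \<le> 2 * (\<integral>X. \<bar>T X - h X\<bar> \<partial>?M)"
    unfolding influence_def T_def[symmetric] by (rule cond_exp_dev[OF sf Ti hi hF])
  also have "(\<integral>X. \<bar>T X - h X\<bar> \<partial>?M) \<le> (\<integral>X. D X \<partial>?M)"
    by (rule integral_mono_AE) (use ae dTi Di in auto)
  also have "(\<integral>X. D X \<partial>?M) \<le> ?B"
  proof -
    have "(\<integral>X. D X \<partial>?M) = enn2real (\<integral>\<^sup>+X. ennreal (D X) \<partial>?M)"
      by (rule integral_eq_nn_integral) (use Dnn in auto)
    also have "\<dots> \<le> enn2real (ennreal ?B)"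
      by (rule enn2real_mono[OF Dnn_int]) simp
    also have "\<dots> = ?B" using Bnn by simp
    finally show ?thesis .
  qed
  finally show ?thesis by simp
qed

end

theorem lemma5p1:
  fixes \<delta> p :: real
  assumes "\<delta> > 0" and "0 < p" and "p < 1"
  shows "\<exists>C::real. \<forall>n::nat. \<forall>v::int \<times> int.
           n \<ge> 1 \<longrightarrow> fst v \<in> {0..int n} \<longrightarrow> snd v \<in> {0..int n} \<longrightarrow>
           summable (\<lambda>i. (influence p n v i)\<^sup>2) \<and>
           (\<Sum>i. (influence p n v i)\<^sup>2)
             \<le> C * (measure (bits_space p) {X \<in> space (bits_space p). v \<in> geodesic_vertices n X}) powr (2 - \<delta>)"
proof -
  have p: "0 < p" "p < 1" using assms by auto
  define \<theta> where "\<theta> = min \<delta> 1 / 2"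
  have th: "0 < \<theta>" "\<theta> < 1" "2 * \<theta> \<le> \<delta>" unfolding \<theta>_def using assms by auto
  define r where "r = (1 - p) powr \<theta>"
  have r0: "0 < r" and r1: "r < 1" unfolding r_def using p th powr_less_mono2[of \<theta> "1 - p" 1] by auto
  define K where "K = 4 * r ^ 2 / (1 - r) ^ 2"
  have K0: "0 \<le> K" unfolding K_def by simp
  define C where "C = K / (1 - r ^ 2)"
  have r2: "r ^ 2 < 1" using r0 r1 by (simp add: power_less_one_iff)
  have sg: "summable (\<lambda>i. (r ^ 2) ^ i)" using r0 r2 by (intro summable_geometric) simp
  show ?thesis
  proof (intro exI allI impI conjI)
    fix n :: nat and v :: "int \<times> int"
    let ?P = "measure (bits_space p) {X \<in> space (bits_space p). v \<in> geodesic_vertices n X}"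
    have P0: "0 \<le> ?P" by simp
    have P1: "?P \<le> 1"
      using prob_space.prob_le_1[OF prob_bits[OF p]] by simp
    have bd: "(influence p n v i)\<^sup>2 \<le> K * ?P powr (2 - 2 * \<theta>) * (r ^ 2) ^ i" for i
    proof -
      have i0: "0 \<le> influence p n v i" unfolding influence_def by simp
      have ib: "influence p n v i \<le> 2 * (?P powr (1 - \<theta>) * r ^ (i + 1) / (1 - r))"
        using influence_bound[OF p th(1,2), of n v i] unfolding r_def .
      have "(influence p n v i)\<^sup>2 \<le> (2 * (?P powr (1 - \<theta>) * r ^ (i + 1) / (1 - r)))\<^sup>2"
        using i0 ib by (intro power_mono) auto
      also have "\<dots> = K * (?P powr (1 - \<theta>) * ?P powr (1 - \<theta>)) * (r ^ 2) ^ i"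
        unfolding K_def using r1 by (simp add: power2_eq_square field_simps power_add power_mult_distrib flip: power_mult)
      also have "?P powr (1 - \<theta>) * ?P powr (1 - \<theta>) = ?P powr (2 - 2 * \<theta>)"
        by (simp add: powr_add[symmetric])
      finally show ?thesis .
    qed
    have sb: "summable (\<lambda>i. K * ?P powr (2 - 2 * \<theta>) * (r ^ 2) ^ i)"
      using sg by (rule summable_mult)
    show "summable (\<lambda>i. (influence p n v i)\<^sup>2)"
      by (rule summable_comparison_test'[OF sb, of 0]) (use bd in simp)
    then have "(\<Sum>i. (influence p n v i)\<^sup>2) \<le> (\<Sum>i. K * ?P powr (2 - 2 * \<theta>) * (r ^ 2) ^ i)"
      using sb bd by (intro suminf_le) auto
    also have "\<dots> = K * ?P powr (2 - 2 * \<theta>) / (1 - r ^ 2)"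
      using r0 r2 by (simp add: suminf_mult suminf_geometric divide_simps)
    also have "\<dots> = C * ?P powr (2 - 2 * \<theta>)" unfolding C_def by simp
    also have "\<dots> \<le> C * ?P powr (2 - \<delta>)"
    proof (rule mult_left_mono)
      show "?P powr (2 - 2 * \<theta>) \<le> ?P powr (2 - \<delta>)"
        by (rule powr_mono') (use th P0 P1 in auto)
      show "0 \<le> C" unfolding C_def using K0 r2 by simp
    qed
    finally show "(\<Sum>i. (influence p n v i)\<^sup>2) \<le> C * ?P powr (2 - \<delta>)" .
  qed
qed

end
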